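(* Let $0<q<1$, consider the representation $\mu=\mu_+\oplus\mu_-$ of $C^\infty(S^2_q)$ on $\ell^2(\mathbb{Z}_+)\oplus\ell^2(\mathbb{Z}_+)$, with grading $\gamma=\begin{pmatrix}1&0\\0&-1\end{pmatrix}$, $F=\begin{pmatrix}0&1\\1&0\end{pmatrix}$ and $|D'|=N\oplus N$. Then for every $x\in C^\infty(S^2_q)$: $\mu_+(x)-\mu_-(x)$ is a rapid decay matrix, $[F,\mu(x)]$ is trace class, the function $\psi(s)=\mathrm{Trace}(\gamma\mu(x)|D'|^{-2s})$ (defined for $\mathrm{Re}\,s>1/2$) extends to an entire function, and $$\mathrm{Res}_{s=0}\,s^{-1}\psi(s)=\psi(0)=\tfrac12\mathrm{Trace}\bigl(\gamma F[F,\mu(x)]\bigr)=\mathrm{Trace}_{\ell^2(\mathbb{Z}_+)}\bigl(\mu_+(x)-\mu_-(x)\bigr).$$ That is, the Connes–Moscovici local cocycle, which here has the single component $\varphi_0(x)=\mathrm{Res}_{s=0}s^{-1}\mathrm{Trace}(\gamma\mu(x)|D'|^{-2s})$, coincides with the Chern character component $\mathrm{ch}^F_0(x)=\tfrac12\mathrm{Trace}(\gamma F[F,\mu(x)])$.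
   Context: $\mathbb{N}=\{0,1,2,\dots\}$, $\mathbb{Z}_+=\{1,2,\dots\}$. On $\ell^2(\mathbb{Z}_+)$ with orthonormal basis $\{|n\rangle\}$, $N|n\rangle=n|n\rangle$, $w|n\rangle=|n+1\rangle$. $A^\infty$ is the $*$-algebra of operators $f=\sum_{n\in\mathbb{N}}(f_nw^n+f_{-n-1}(w^* )^{n+1})+\sum_{j,k\in\mathbb{N}}f_{jk}w^j(1-ww^* )(w^* )^k$ with $\{f_n\}_{n\in\mathbb{Z}}$ a rapid decay sequence and $\{f_{jk}\}$ a rapid decay matrix; $\sigma(f)(\theta)=\sum_nf_ne^{in\theta}$. $C^\infty(S^2_q)=\{(x,y)\in A^\infty\oplus A^\infty:\sigma(x)=\sigma(y)\}$, and for $x=(x_+,x_-)$ we write $\mu_\pm(x)=x_\pm$ and $\mu(x)=x_+\oplus x_-$ on $\ell^2(\mathbb{Z}_+)\oplus\ell^2(\mathbb{Z}_+)$. A rapid decay matrix is an operator whose matrix $(T_{jk})$ in the basis $|n\rangle$ satisfies $\sup_{j,k}(j+k)^p|T_{jk}|<\infty$ for all $p$. *)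

theory Defs
  imports "HOL-Complex_Analysis.Complex_Analysis"
begin

text \<open>An operator on l2(Z+) is represented by its matrix in the
basis |n>, n = 1,2,...; we index with 0-based naturals, i.e. M i k is the
entry <i+1| M |k+1>. Operators on l2(Z+) (+) l2(Z+) are matrices indexed by
nat + nat (Inl = first summand, Inr = second summand).\<close>

type_synonym mat = "nat \<Rightarrow> nat \<Rightarrow> complex"
type_synonym mat2 = "nat + nat \<Rightarrow> nat + nat \<Rightarrow> complex"

definition rapid_decay_seq :: "(int \<Rightarrow> complex) \<Rightarrow> bool" where
  "rapid_decay_seq a \<longleftrightarrow> (\<forall>p::nat. \<exists>C. \<forall>n. (real_of_int \<bar>n\<bar>) ^ p * cmod (a n) \<le> C)"

definition rapid_decay_mat :: "mat \<Rightarrow> bool" where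
  "rapid_decay_mat T \<longleftrightarrow> (\<forall>p::nat. \<exists>C. \<forall>j k. (real (j + 1 + (k + 1))) ^ p * cmod (T j k) \<le> C)"

text \<open>Matrix entries of f = sum (f_n w^n + f_{-n-1} w*^{n+1}) + sum f_jk w^j(1-ww*)w*^k:
<m|w^n|k> = [m = k+n], <m|w*^{n+1}|k> = [k = m+n+1], w^j(1-ww*)w*^k = |j+1><k+1|.\<close>
definition Ainf :: "mat set" where
  "Ainf = {M. \<exists>a g. rapid_decay_seq a \<and> rapid_decay_mat g \<and>
                 (\<forall>i k. M i k = a (int i - int k) + g i k)}"

definition toeplitz_coeffs :: "mat \<Rightarrow> int \<Rightarrow> complex" where
  "toeplitz_coeffs M = (THE a. \<exists>g. rapid_decay_seq a \<and> rapid_decay_mat g \<and>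
                 (\<forall>i k. M i k = a (int i - int k) + g i k))"

definition sigma :: "mat \<Rightarrow> real \<Rightarrow> complex" where
  "sigma M \<theta> = (\<Sum>\<^sub>\<infinity>n::int. toeplitz_coeffs M n * exp (\<i> * of_int n * of_real \<theta>))"

definition C_inf_S2q :: "(mat \<times> mat) set" where
  "C_inf_S2q = {(x, y). x \<in> Ainf \<and> y \<in> Ainf \<and> sigma x = sigma y}"

definition mu_plus :: "mat \<times> mat \<Rightarrow> mat" where "mu_plus x = fst x"
definition mu_minus :: "mat \<times> mat \<Rightarrow> mat" where "mu_minus x = snd x"

definition blk :: "mat \<Rightarrow> mat \<Rightarrow> mat \<Rightarrow> mat \<Rightarrow> mat2" where
  "blk A B C D = (\<lambda>i j. case (i, j) of
      (Inl a, Inl b) \<Rightarrow> A a b | (Inl a, Inr b) \<Rightarrow> B a b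
    | (Inr a, Inl b) \<Rightarrow> C a b | (Inr a, Inr b) \<Rightarrow> D a b)"

definition id_mat :: mat where "id_mat = (\<lambda>i j. if i = j then 1 else 0)"
definition zero_mat :: mat where "zero_mat = (\<lambda>i j. 0)"

definition mu :: "mat \<times> mat \<Rightarrow> mat2" where
  "mu x = blk (mu_plus x) zero_mat zero_mat (mu_minus x)"

definition gamma_op :: mat2 where "gamma_op = blk id_mat zero_mat zero_mat (\<lambda>i j. - id_mat i j)"
definition F_op :: mat2 where "F_op = blk zero_mat id_mat id_mat zero_mat"

definition N_pow :: "complex \<Rightarrow> mat" where
  "N_pow s = (\<lambda>i j. if i = j then (of_nat (i + 1)) powr (- 2 * s) else 0)"
definition absD_pow :: "complex \<Rightarrow> mat2" where
  "absD_pow s = blk (N_pow s) zero_mat zero_mat (N_pow s)"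

definition mmult :: "('i \<Rightarrow> 'i \<Rightarrow> complex) \<Rightarrow> ('i \<Rightarrow> 'i \<Rightarrow> complex) \<Rightarrow> ('i \<Rightarrow> 'i \<Rightarrow> complex)" where
  "mmult A B = (\<lambda>i k. \<Sum>\<^sub>\<infinity>j. A i j * B j k)"

definition mcomm :: "('i \<Rightarrow> 'i \<Rightarrow> complex) \<Rightarrow> ('i \<Rightarrow> 'i \<Rightarrow> complex) \<Rightarrow> ('i \<Rightarrow> 'i \<Rightarrow> complex)" where
  "mcomm A B = (\<lambda>i k. mmult A B i k - mmult B A i k)"

definition mtrace :: "('i \<Rightarrow> 'i \<Rightarrow> complex) \<Rightarrow> complex" where
  "mtrace M = (\<Sum>\<^sub>\<infinity>i. M i i)"

definition hilbert_schmidt :: "('i \<Rightarrow> 'i \<Rightarrow> complex) \<Rightarrow> bool" where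
  "hilbert_schmidt A \<longleftrightarrow> (\<lambda>(i, j). (cmod (A i j))\<^sup>2) summable_on UNIV"

definition trace_class :: "('i \<Rightarrow> 'i \<Rightarrow> complex) \<Rightarrow> bool" where
  "trace_class T \<longleftrightarrow> (\<exists>A B. hilbert_schmidt A \<and> hilbert_schmidt B \<and> T = mmult A B)"

definition psi :: "mat \<times> mat \<Rightarrow> complex \<Rightarrow> complex" where
  "psi x s = mtrace (mmult (mmult gamma_op (mu x)) (absD_pow s))"

end

theory Submission
  imports Defs
begin
lemma sum_inv_sq_nat': "summable (\<lambda>n::nat. 1 / (1 + real n)^2)"
proof -
  have "summable (\<lambda>n::nat. inverse (real n ^ 2))" by (rule inverse_power_summable) auto
  then have "summable (\<lambda>n::nat. inverse (real (Suc n) ^ 2))" by (subst summable_Suc_iff)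
  then show ?thesis by (simp add: field_simps)
qed

lemma sum_inv_sq_nat: "(\<lambda>n::nat. 1 / (1 + real n)^2) summable_on UNIV"
  by (rule summable_nonneg_imp_summable_on[OF sum_inv_sq_nat']) simp

lemma sum_inv_sq_int: "(\<lambda>n::int. 1 / (1 + real_of_int \<bar>n\<bar>)^2) summable_on UNIV"
proof -
  have u: "(UNIV::int set) = range int \<union> range (\<lambda>n. - int n)"
    by (metis (no_types, lifting) UNIV_eq_I Un_iff int_cases2 rangeI)
  have "(\<lambda>n::int. 1 / (1 + real_of_int \<bar>n\<bar>)^2) summable_on range int"
    by (subst summable_on_reindex) (auto simp: o_def sum_inv_sq_nat)
  moreover have "(\<lambda>n::int. 1 / (1 + real_of_int \<bar>n\<bar>)^2) summable_on range (\<lambda>n. - int n)"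
    by (subst summable_on_reindex) (auto simp: o_def sum_inv_sq_nat inj_on_def)
  ultimately show ?thesis using u by (metis summable_on_union)
qed

lemma rds_bound:
  assumes "rapid_decay_seq a"
  shows "\<exists>C. \<forall>n. cmod (a n) \<le> C / (1 + real_of_int \<bar>n\<bar>)^2"
proof -
  obtain C0 where C0: "\<And>n. (real_of_int \<bar>n\<bar>) ^ 0 * cmod (a n) \<le> C0"
    using assms unfolding rapid_decay_seq_def by blast
  obtain C2 where C2: "\<And>n. (real_of_int \<bar>n\<bar>) ^ 2 * cmod (a n) \<le> C2"
    using assms unfolding rapid_decay_seq_def by blast
  show ?thesis
  proof (intro exI allI)
    fix n
    define x where "x = real_of_int \<bar>n\<bar>"
    have x0: "x \<ge> 0" unfolding x_def by simp
    have "0 \<le> (x - 1)^2" by simp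
    then have "(1 + x)^2 \<le> 2 + 2 * x^2"
      unfolding power2_sum power2_diff by simp
    then have "(1 + x)^2 * cmod (a n) \<le> (2 + 2 * x^2) * cmod (a n)"
      by (rule mult_right_mono) simp
    also have "\<dots> = 2 * cmod (a n) + 2 * (x^2 * cmod (a n))" by (simp add: algebra_simps)
    also have "\<dots> \<le> 2 * C0 + 2 * C2" using C0[of n] C2[of n] unfolding x_def by simp
    finally have "(1 + x)^2 * cmod (a n) \<le> 2 * C0 + 2 * C2" .
    moreover have "(1 + x)^2 > 0" using x0 by simp
    ultimately show "cmod (a n) \<le> (2 * C0 + 2 * C2) / (1 + real_of_int \<bar>n\<bar>)^2"
      unfolding x_def[symmetric] by (simp add: field_simps)
  qed
qed

lemma rds_summable:
  assumes "rapid_decay_seq a"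
  shows "(\<lambda>n. cmod (a n)) summable_on UNIV" and "(\<lambda>n. (cmod (a n))^2) summable_on UNIV"
proof -
  obtain C where C: "\<And>n. cmod (a n) \<le> C / (1 + real_of_int \<bar>n\<bar>)^2"
    using rds_bound[OF assms] by blast
  have s: "(\<lambda>n::int. C * (1 / (1 + real_of_int \<bar>n\<bar>)^2)) summable_on UNIV"
    by (rule summable_on_cmult_right[OF sum_inv_sq_int])
  show 1: "(\<lambda>n. cmod (a n)) summable_on UNIV"
    by (rule summable_on_comparison_test[OF s]) (use C in auto)
  have "cmod (a 0) \<le> C" using C[of 0] by simp
  then have C0: "C \<ge> 0" by (meson norm_ge_zero order_trans)
  have le: "cmod (a n) \<le> C" for n
  proof -
    have "C / (1 + real_of_int \<bar>n\<bar>)^2 \<le> C / 1"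
      by (rule divide_left_mono) (use C0 in auto)
    then show ?thesis using C[of n] by linarith
  qed
  show "(\<lambda>n. (cmod (a n))^2) summable_on UNIV"
    by (rule summable_on_comparison_test[OF summable_on_cmult_right[OF 1, of C]])
       (auto simp: power2_eq_square le mult_right_mono)
qed

lemma rdm_bound:
  assumes "rapid_decay_mat g"
  shows "\<exists>C. \<forall>j k. cmod (g j k) \<le> C / (real (j + k + 2))^p"
proof -
  obtain C where C: "\<And>j k. (real (j + 1 + (k + 1))) ^ p * cmod (g j k) \<le> C"
    using assms unfolding rapid_decay_mat_def by blast
  show ?thesis
  proof (intro exI allI)
    fix j k
    have "(real (j + k + 2))^p > 0" by simp
    moreover have "(real (j + k + 2))^p * cmod (g j k) \<le> C" using C[of j k]
      by (simp add: add.assoc add.left_commute)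
    ultimately show "cmod (g j k) \<le> C / (real (j + k + 2))^p" by (simp add: field_simps)
  qed
qed

lemma decomp_unique:
  assumes g: "rapid_decay_mat g" and g': "rapid_decay_mat g'"
    and eq: "\<And>i k. a (int i - int k) + g i k = a' (int i - int k) + g' i k"
  shows "a = a'"
proof
  fix n
  obtain C where C: "\<And>j k. cmod (g j k) \<le> C / (real (j + k + 2))^1"
    using rdm_bound[OF g] by blast
  obtain C' where C': "\<And>j k. cmod (g' j k) \<le> C' / (real (j + k + 2))^1"
    using rdm_bound[OF g'] by blast
  define d where "d = a n - a' n"
  have bnd: "cmod d * (real t + 1) \<le> C + C'" for t
  proof -
    define i where "i = nat n + t"
    define k where "k = nat (- n) + t"
    have ik: "int i - int k = n" unfolding i_def k_def by simp
    have "d = g' i k - g i k" using eq[of i k] unfolding ik d_def by (simp add: algebra_simps)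
    then have "cmod d \<le> cmod (g' i k) + cmod (g i k)" by (simp add: norm_triangle_ineq4)
    also have "\<dots> \<le> (C' + C) / real (i + k + 2)" using C[of i k] C'[of i k] by (simp add: add_divide_distrib)
    finally have "cmod d * real (i + k + 2) \<le> C' + C" by (simp add: field_simps)
    moreover have "cmod d * (real t + 1) \<le> cmod d * real (i + k + 2)"
      by (rule mult_left_mono) (auto simp: i_def k_def)
    ultimately show ?thesis by simp
  qed
  show "a n = a' n"
  proof (rule ccontr)
    assume "a n \<noteq> a' n"
    then have dpos: "cmod d > 0" unfolding d_def by simp
    obtain t :: nat where t: "real t > (C + C') / cmod d" using reals_Archimedean2 by blast
    then have "real t * cmod d > C + C'" using dpos by (simp add: field_simps)
    then show False using bnd[of t] dpos by (simp add: algebra_simps)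
  qed
qed

lemma toeplitz_coeffs_eq:
  assumes "rapid_decay_seq a" "rapid_decay_mat g" "\<And>i k. M i k = a (int i - int k) + g i k"
  shows "toeplitz_coeffs M = a"
  unfolding toeplitz_coeffs_def
proof (rule the_equality)
  show "\<exists>g. rapid_decay_seq a \<and> rapid_decay_mat g \<and> (\<forall>i k. M i k = a (int i - int k) + g i k)"
    using assms by (intro exI[of _ g]) simp
next
  fix a' assume "\<exists>g'. rapid_decay_seq a' \<and> rapid_decay_mat g' \<and> (\<forall>i k. M i k = a' (int i - int k) + g' i k)"
  then obtain g' where "rapid_decay_mat g'" "\<And>i k. M i k = a' (int i - int k) + g' i k" by blast
  moreover have "\<And>i k. a' (int i - int k) + g' i k = a (int i - int k) + g i k"
    using calculation(2) assms(3) by simp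
  ultimately show "a' = a" using decomp_unique[OF \<open>rapid_decay_mat g'\<close> assms(2), of a' a] by blast
qed

lemma exp_int_integral:
  fixes k :: int
  shows "((\<lambda>\<theta>::real. exp (\<theta> *\<^sub>R (\<i> * of_int k))) has_integral (if k = 0 then complex_of_real (2*pi) else 0)) {0..2*pi}"
proof (cases "k = 0")
  case True
  then show ?thesis using has_integral_const_real[of "1::complex" 0 "2*pi"]
    by (simp add: scaleR_conv_of_real)
next
  case False
  define z where "z = \<i> * of_int k"
  have z0: "z \<noteq> 0" using False unfolding z_def by simp
  have "((\<lambda>\<theta>::real. exp (\<theta> *\<^sub>R z)) has_integral
          (exp ((2*pi) *\<^sub>R z) / z - exp ((0::real) *\<^sub>R z) / z)) {0..2*pi}"
  proof (rule fundamental_theorem_of_calculus)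
    fix x :: real assume "x \<in> {0..2*pi}"
    have "((\<lambda>t. exp (t *\<^sub>R z) / z) has_vector_derivative (exp (x *\<^sub>R z) * z) / z) (at x within {0..2*pi})"
      by (intro has_vector_derivative_divide exp_scaleR_has_vector_derivative_right)
    then show "((\<lambda>t. exp (t *\<^sub>R z) / z) has_vector_derivative exp (x *\<^sub>R z)) (at x within {0..2*pi})"
      using z0 by simp
  qed simp
  moreover have "exp ((2*pi) *\<^sub>R z) = 1"
  proof -
    have "exp ((2*pi) *\<^sub>R z) = exp (complex_of_real (2 * real_of_int k * pi) * \<i>)"
      unfolding z_def by (simp add: scaleR_conv_of_real algebra_simps)
    also have "\<dots> = 1" by (rule exp_integer_2pi) simp
    finally show ?thesis .
  qed
  ultimately show ?thesis using False unfolding z_def by simp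
qed

lemma fourier_unique:
  fixes c :: "int \<Rightarrow> complex"
  assumes abs: "(\<lambda>n. cmod (c n)) summable_on UNIV"
    and zero: "\<And>\<theta>. (\<Sum>\<^sub>\<infinity>n. c n * exp (\<i> * of_int n * of_real \<theta>)) = 0"
  shows "c m = 0"
proof -
  define e where "e n \<theta> = c n * exp (\<theta> *\<^sub>R (\<i> * of_int (n - m)))" for n \<theta>
  have e_eq: "e n \<theta> = (c n * exp (\<i> * of_int n * of_real \<theta>)) * exp (- (\<i> * of_int m * of_real \<theta>))" for n \<theta>
  proof -
    have "(c n * exp (\<i> * of_int n * of_real \<theta>)) * exp (- (\<i> * of_int m * of_real \<theta>))
        = c n * exp (\<i> * of_int n * of_real \<theta> + - (\<i> * of_int m * of_real \<theta>))"
      by (simp only: exp_add mult.assoc)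
    also have "\<dots> = e n \<theta>" unfolding e_def
      by (simp add: scaleR_conv_of_real algebra_simps)
    finally show ?thesis by simp
  qed
  have norm_e: "norm (e n \<theta>) = cmod (c n)" for n \<theta>
    unfolding e_def by (simp add: norm_mult scaleR_conv_of_real)
  have norm_f: "norm (c n * exp (\<i> * of_int n * of_real \<theta>)) = cmod (c n)" for n \<theta>
    by (simp add: norm_mult)
  have esum: "((\<lambda>n. e n \<theta>) has_sum 0) UNIV" for \<theta>
  proof -
    have "(\<lambda>n. c n * exp (\<i> * of_int n * of_real \<theta>)) summable_on UNIV"
      by (rule abs_summable_summable) (simp add: norm_f abs)
    then have "((\<lambda>n. c n * exp (\<i> * of_int n * of_real \<theta>)) has_sum 0) UNIV"
      using zero[of \<theta>] by (metis has_sum_infsum)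
    from has_sum_cmult_left[OF this, of "exp (- (\<i> * of_int m * of_real \<theta>))"]
    show ?thesis by (simp add: e_eq)
  qed
  have esumm: "(\<lambda>n. e n \<theta>) summable_on A" for \<theta> A
    by (rule summable_on_subset_banach[of _ UNIV]) (use esum in \<open>auto simp: summable_on_def\<close>)
  have csumm: "(\<lambda>n. cmod (c n)) summable_on A" for A
    by (rule summable_on_subset_banach[OF abs]) auto
  define S where "S = (\<Sum>\<^sub>\<infinity>n. cmod (c n))"
  have Shas: "((\<lambda>n. cmod (c n)) has_sum S) UNIV" unfolding S_def using abs by (simp add: has_sum_infsum)
  have bound: "norm (\<Sum>n\<in>X. e n \<theta>) \<le> S - (\<Sum>n\<in>X. cmod (c n))" if X: "finite X" for X \<theta>
  proof -
    have u: "(UNIV::int set) = X \<union> (UNIV - X)" by auto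
    have "0 = (\<Sum>\<^sub>\<infinity>n. e n \<theta>)" using esum[of \<theta>] by (simp add: infsumI)
    also have "\<dots> = (\<Sum>\<^sub>\<infinity>n\<in>X. e n \<theta>) + (\<Sum>\<^sub>\<infinity>n\<in>UNIV - X. e n \<theta>)"
      by (subst u, rule infsum_Un_disjoint) (auto intro: esumm)
    finally have 1: "(\<Sum>n\<in>X. e n \<theta>) = - (\<Sum>\<^sub>\<infinity>n\<in>UNIV - X. e n \<theta>)" using X
      by (simp add: eq_neg_iff_add_eq_0 add.commute)
    have "S = (\<Sum>\<^sub>\<infinity>n\<in>X. cmod (c n)) + (\<Sum>\<^sub>\<infinity>n\<in>UNIV - X. cmod (c n))"
      unfolding S_def by (subst u, rule infsum_Un_disjoint) (auto intro: csumm)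
    then have 2: "(\<Sum>\<^sub>\<infinity>n\<in>UNIV - X. cmod (c n)) = S - (\<Sum>n\<in>X. cmod (c n))" using X by simp
    have "norm (\<Sum>\<^sub>\<infinity>n\<in>UNIV - X. e n \<theta>) \<le> (\<Sum>\<^sub>\<infinity>n\<in>UNIV - X. norm (e n \<theta>))"
      by (rule norm_infsum_bound) (simp add: norm_e csumm)
    then show ?thesis using 1 2 by (simp add: norm_e)
  qed
  have ulim: "uniform_limit {0..2*pi} (\<lambda>X \<theta>. \<Sum>n\<in>X. e n \<theta>) (\<lambda>\<theta>. 0) (finite_subsets_at_top UNIV)"
  proof (rule uniform_limitI)
    fix \<epsilon> :: real assume "\<epsilon> > 0"
    have "((\<lambda>X. \<Sum>n\<in>X. cmod (c n)) \<longlongrightarrow> S) (finite_subsets_at_top UNIV)"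
      using Shas unfolding has_sum_def .
    then have ev: "\<forall>\<^sub>F X in finite_subsets_at_top UNIV. S - \<epsilon> < (\<Sum>n\<in>X. cmod (c n))"
      using \<open>\<epsilon> > 0\<close> by (intro order_tendstoD) auto
    have ev2: "\<forall>\<^sub>F X in finite_subsets_at_top UNIV. finite X" by auto
    show "\<forall>\<^sub>F X in finite_subsets_at_top UNIV. \<forall>\<theta>\<in>{0..2*pi}. dist (\<Sum>n\<in>X. e n \<theta>) 0 < \<epsilon>"
      using ev ev2
    proof eventually_elim
      case (elim X)
      show ?case
      proof
        fix \<theta> :: real assume "\<theta> \<in> {0..2*pi}"
        show "dist (\<Sum>n\<in>X. e n \<theta>) 0 < \<epsilon>" using bound[OF elim(2), of \<theta>] elim(1) by simp
      qed
    qed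
  qed
  have cont: "continuous_on {0..2*pi} (\<lambda>\<theta>. \<Sum>n\<in>X. e n \<theta>)" for X
    unfolding e_def by (intro continuous_intros)
  obtain I J where I: "\<And>X. ((\<lambda>\<theta>. \<Sum>n\<in>X. e n \<theta>) has_integral I X) {0..2*pi}"
    and J: "((\<lambda>\<theta>. 0) has_integral J) {0..2*pi}"
    and IJ: "(I \<longlongrightarrow> J) (finite_subsets_at_top UNIV)"
    by (rule uniform_limit_integral[OF ulim cont]) auto
  have J0: "J = 0" using J by simp
  have Ival: "I X = c m * complex_of_real (2*pi)" if "finite X" "m \<in> X" for X
  proof -
    have "((\<lambda>\<theta>. \<Sum>n\<in>X. e n \<theta>) has_integral
            (\<Sum>n\<in>X. c n * (if n - m = 0 then complex_of_real (2*pi) else 0))) {0..2*pi}"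
      unfolding e_def by (intro has_integral_sum that has_integral_mult_right exp_int_integral)
    moreover have "(\<Sum>n\<in>X. c n * (if n - m = 0 then complex_of_real (2*pi) else 0))
                   = (\<Sum>n\<in>X. if n = m then c n * complex_of_real (2*pi) else 0)"
      by (intro sum.cong) auto
    moreover have "\<dots> = c m * complex_of_real (2*pi)" using that by (simp add: sum.delta)
    ultimately show ?thesis using I[of X] by (metis has_integral_unique)
  qed
  have "\<forall>\<^sub>F X in finite_subsets_at_top UNIV. I X = c m * complex_of_real (2*pi)"
    unfolding eventually_finite_subsets_at_top
  proof (intro exI[of _ "{m}"] conjI allI impI)
    fix Y assume "finite Y \<and> {m} \<subseteq> Y \<and> Y \<subseteq> UNIV"
    then show "I Y = c m * complex_of_real (2*pi)" by (intro Ival) auto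
  qed auto
  then have "(I \<longlongrightarrow> c m * complex_of_real (2*pi)) (finite_subsets_at_top UNIV)"
    by (rule tendsto_eventually)
  with IJ have "c m * complex_of_real (2*pi) = J"
    by (intro tendsto_unique[OF finite_subsets_at_top_neq_bot])
  then show ?thesis using J0 by simp
qed

lemma Ainf_decomp:
  assumes "M \<in> Ainf"
  shows "\<exists>g. rapid_decay_seq (toeplitz_coeffs M) \<and> rapid_decay_mat g \<and>
             (\<forall>i k. M i k = toeplitz_coeffs M (int i - int k) + g i k)"
proof -
  obtain a g where a: "rapid_decay_seq a" and g: "rapid_decay_mat g"
    and M: "\<And>i k. M i k = a (int i - int k) + g i k"
    using assms unfolding Ainf_def by blast
  have "toeplitz_coeffs M = a" by (rule toeplitz_coeffs_eq[OF a g M])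
  then show ?thesis using a g M by (intro exI[of _ g]) simp
qed

lemma sigma_coeffs_eq:
  assumes a: "rapid_decay_seq a" and b: "rapid_decay_seq b"
    and sa: "toeplitz_coeffs M = a" and sb: "toeplitz_coeffs M' = b"
    and eq: "sigma M = sigma M'"
  shows "a = b"
proof
  fix m
  define c where "c n = a n - b n" for n
  have absa: "(\<lambda>n. cmod (a n)) summable_on UNIV" using rds_summable(1)[OF a] .
  have absb: "(\<lambda>n. cmod (b n)) summable_on UNIV" using rds_summable(1)[OF b] .
  have absc: "(\<lambda>n. cmod (c n)) summable_on UNIV"
  proof (rule summable_on_comparison_test[OF summable_on_add[OF absa absb]])
    show "cmod (c n) \<le> cmod (a n) + cmod (b n)" for n unfolding c_def by (rule norm_triangle_ineq4)
  qed auto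
  have "(\<Sum>\<^sub>\<infinity>n. c n * exp (\<i> * of_int n * of_real \<theta>)) = 0" for \<theta>
  proof -
    have sa': "(\<lambda>n. a n * exp (\<i> * of_int n * of_real \<theta>)) summable_on UNIV"
      by (rule abs_summable_summable) (simp add: norm_mult absa)
    have sb': "(\<lambda>n. - (b n * exp (\<i> * of_int n * of_real \<theta>))) summable_on UNIV"
      by (rule abs_summable_summable) (simp add: norm_mult absb)
    have "(\<Sum>\<^sub>\<infinity>n. c n * exp (\<i> * of_int n * of_real \<theta>))
        = (\<Sum>\<^sub>\<infinity>n. a n * exp (\<i> * of_int n * of_real \<theta>) + - (b n * exp (\<i> * of_int n * of_real \<theta>)))"
      unfolding c_def by (simp add: algebra_simps)
    also have "\<dots> = (\<Sum>\<^sub>\<infinity>n. a n * exp (\<i> * of_int n * of_real \<theta>)) + (\<Sum>\<^sub>\<infinity>n. - (b n * exp (\<i> * of_int n * of_real \<theta>)))"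
      by (rule infsum_add[OF sa' sb'])
    also have "\<dots> = sigma M \<theta> - sigma M' \<theta>"
      unfolding sigma_def sa sb by (simp add: infsum_uminus)
    also have "\<dots> = 0" using eq by simp
    finally show ?thesis .
  qed
  then have "c m = 0" by (intro fourier_unique[OF absc])
  then show "a m = b m" unfolding c_def by simp
qed

lemma rapid_decay_mat_diff:
  assumes "rapid_decay_mat g" "rapid_decay_mat h"
  shows "rapid_decay_mat (\<lambda>i k. g i k - h i k)"
  unfolding rapid_decay_mat_def
proof
  fix p :: nat
  obtain C1 where C1: "\<And>j k. (real (j + 1 + (k + 1))) ^ p * cmod (g j k) \<le> C1"
    using assms(1) unfolding rapid_decay_mat_def by blast
  obtain C2 where C2: "\<And>j k. (real (j + 1 + (k + 1))) ^ p * cmod (h j k) \<le> C2"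
    using assms(2) unfolding rapid_decay_mat_def by blast
  show "\<exists>C. \<forall>j k. (real (j + 1 + (k + 1))) ^ p * cmod (g j k - h j k) \<le> C"
  proof (intro exI allI)
    fix j k
    have "(real (j + 1 + (k + 1))) ^ p * cmod (g j k - h j k)
          \<le> (real (j + 1 + (k + 1))) ^ p * (cmod (g j k) + cmod (h j k))"
      by (rule mult_left_mono) (auto intro: norm_triangle_ineq4)
    also have "\<dots> \<le> C1 + C2" using C1[of j k] C2[of j k] by (simp add: algebra_simps)
    finally show "(real (j + 1 + (k + 1))) ^ p * cmod (g j k - h j k) \<le> C1 + C2" .
  qed
qed

lemma C_inf_decomp:
  assumes "x \<in> C_inf_S2q"
  shows "\<exists>a gp gm. rapid_decay_seq a \<and> rapid_decay_mat gp \<and> rapid_decay_mat gm \<and>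
     (\<forall>i k. mu_plus x i k = a (int i - int k) + gp i k) \<and>
     (\<forall>i k. mu_minus x i k = a (int i - int k) + gm i k)"
proof -
  obtain xp xm where x: "x = (xp, xm)" by (cases x)
  have xp: "xp \<in> Ainf" and xm: "xm \<in> Ainf" and sig: "sigma xp = sigma xm"
    using assms unfolding x C_inf_S2q_def by auto
  obtain gp where gp: "rapid_decay_seq (toeplitz_coeffs xp)" "rapid_decay_mat gp"
      "\<And>i k. xp i k = toeplitz_coeffs xp (int i - int k) + gp i k"
    using Ainf_decomp[OF xp] by blast
  obtain gm where gm: "rapid_decay_seq (toeplitz_coeffs xm)" "rapid_decay_mat gm"
      "\<And>i k. xm i k = toeplitz_coeffs xm (int i - int k) + gm i k"
    using Ainf_decomp[OF xm] by blast
  have "toeplitz_coeffs xp = toeplitz_coeffs xm"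
    by (rule sigma_coeffs_eq[OF gp(1) gm(1) refl refl sig])
  then show ?thesis
    using gp gm unfolding x mu_plus_def mu_minus_def
    by (intro exI[of _ "toeplitz_coeffs xp"] exI[of _ gp] exI[of _ gm]) simp
qed

lemma col_bound:
  assumes a: "rapid_decay_seq a" and g: "rapid_decay_mat g"
    and M: "\<And>i k. M i k = a (int i - int k) + g i k"
  shows "\<exists>K. \<forall>k. (\<lambda>i. (cmod (M i k))^2) summable_on UNIV \<and> (\<Sum>\<^sub>\<infinity>i. (cmod (M i k))^2) \<le> K"
proof -
  define A where "A n = (cmod (a n))^2" for n
  have Asum: "A summable_on UNIV" unfolding A_def by (rule rds_summable(2)[OF a])
  obtain C where C: "\<And>j k. cmod (g j k) \<le> C / (real (j + k + 2))^1"
    using rdm_bound[OF g] by blast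
  have "cmod (g 0 0) * 2 \<le> C" using C[of 0 0] by (simp add: divide_le_eq)
  then have C0: "C \<ge> 0" using norm_ge_zero[of "g 0 0"] by linarith
  define T where "T = (\<Sum>\<^sub>\<infinity>i::nat. 1 / (1 + real i)^2)"
  define K where "K = 2 * (\<Sum>\<^sub>\<infinity>n. A n) + 2 * C^2 * T"
  show ?thesis
  proof (intro exI[of _ K] allI conjI)
    fix k
    define \<phi> where "\<phi> i = int i - int k" for i
    have inj: "inj \<phi>" unfolding \<phi>_def inj_on_def by simp
    have s1: "(A \<circ> \<phi>) summable_on UNIV"
      using summable_on_reindex[OF inj, of A] summable_on_subset_banach[OF Asum, of "range \<phi>"] by simp
    have i1: "(\<Sum>\<^sub>\<infinity>i. (A \<circ> \<phi>) i) \<le> (\<Sum>\<^sub>\<infinity>n. A n)"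
    proof -
      have "(\<Sum>\<^sub>\<infinity>i. (A \<circ> \<phi>) i) = (\<Sum>\<^sub>\<infinity>n\<in>range \<phi>. A n)"
        using infsum_reindex[OF inj, of A] by (simp add: o_def)
      also have "\<dots> \<le> (\<Sum>\<^sub>\<infinity>n. A n)"
        by (rule infsum_mono_neutral[OF summable_on_subset_banach[OF Asum] Asum]) (auto simp: A_def)
      finally show ?thesis .
    qed
    define h where "h i = 2 * (A \<circ> \<phi>) i + 2 * C^2 * (1 / (1 + real i)^2)" for i
    have hs: "h summable_on UNIV" unfolding h_def
      by (intro summable_on_add summable_on_cmult_right s1 sum_inv_sq_nat)
    have le: "(cmod (M i k))^2 \<le> h i" for i
    proof -
      have "cmod (M i k) \<le> cmod (a (\<phi> i)) + cmod (g i k)"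
        unfolding M \<phi>_def by (rule norm_triangle_ineq)
      moreover have "cmod (g i k) \<le> C / (1 + real i)"
      proof -
        have "C / real (i + k + 2) \<le> C / (1 + real i)"
          by (rule divide_left_mono) (use C0 in auto)
        then show ?thesis using C[of i k] by simp
      qed
      ultimately have "cmod (M i k) \<le> cmod (a (\<phi> i)) + C / (1 + real i)" by simp
      then have "(cmod (M i k))^2 \<le> (cmod (a (\<phi> i)) + C / (1 + real i))^2"
        by (rule power_mono) simp
      also have "\<dots> \<le> 2 * (cmod (a (\<phi> i)))^2 + 2 * (C / (1 + real i))^2"
      proof -
        have "0 \<le> (cmod (a (\<phi> i)) - C / (1 + real i))^2" by simp
        then show ?thesis unfolding power2_sum power2_diff by simp
      qed
      also have "\<dots> = h i" unfolding h_def A_def by (simp add: power_divide)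
      finally show ?thesis .
    qed
    show "(\<lambda>i. (cmod (M i k))^2) summable_on UNIV"
      by (rule summable_on_comparison_test[OF hs]) (auto simp: le)
    have "(\<Sum>\<^sub>\<infinity>i. (cmod (M i k))^2) \<le> (\<Sum>\<^sub>\<infinity>i. h i)"
      by (rule infsum_mono[OF summable_on_comparison_test[OF hs] hs]) (auto simp: le)
    also have "(\<Sum>\<^sub>\<infinity>i. h i) = 2 * (\<Sum>\<^sub>\<infinity>i. (A \<circ> \<phi>) i) + 2 * C^2 * T"
    proof -
      have "(\<Sum>\<^sub>\<infinity>i. h i) = (\<Sum>\<^sub>\<infinity>i. 2 * (A \<circ> \<phi>) i) + (\<Sum>\<^sub>\<infinity>i. 2 * C^2 * (1 / (1 + real i)^2))"
        unfolding h_def by (rule infsum_add) (intro summable_on_cmult_right s1 sum_inv_sq_nat)+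
      then show ?thesis unfolding T_def by (simp only: infsum_cmult_right')
    qed
    also have "\<dots> \<le> K" unfolding K_def using i1 by simp
    finally show "(\<Sum>\<^sub>\<infinity>i. (cmod (M i k))^2) \<le> K" .
  qed
qed

lemma blk_simps[simp]:
  "blk A B C D (Inl a) (Inl b) = A a b" "blk A B C D (Inl a) (Inr b) = B a b"
  "blk A B C D (Inr a) (Inl b) = C a b" "blk A B C D (Inr a) (Inr b) = D a b"
  by (simp_all add: blk_def)

definition sw :: "nat + nat \<Rightarrow> nat + nat" where "sw = case_sum Inr Inl"

lemma sw_simps[simp]: "sw (Inl a) = Inr a" "sw (Inr a) = Inl a"
  by (simp_all add: sw_def)

lemma mmult_single_row:
  assumes "\<And>j. j \<noteq> p \<Longrightarrow> A i j = 0"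
  shows "mmult A B i k = A i p * B p k"
proof -
  have "(\<Sum>\<^sub>\<infinity>j. A i j * B j k) = (\<Sum>\<^sub>\<infinity>j\<in>{p}. A i j * B j k)"
    by (rule infsum_cong_neutral) (auto simp: assms)
  then show ?thesis unfolding mmult_def by simp
qed

lemma mmult_single_col:
  assumes "\<And>j. j \<noteq> p \<Longrightarrow> B j k = 0"
  shows "mmult A B i k = A i p * B p k"
proof -
  have "(\<Sum>\<^sub>\<infinity>j. A i j * B j k) = (\<Sum>\<^sub>\<infinity>j\<in>{p}. A i j * B j k)"
    by (rule infsum_cong_neutral) (auto simp: assms)
  then show ?thesis unfolding mmult_def by simp
qed

lemma mmult_rowdiag:
  assumes "\<And>i j. j \<noteq> i \<Longrightarrow> A i j = 0"
  shows "mmult A B i k = A i i * B i k"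
  by (rule mmult_single_row) (use assms in auto)

lemma mmult_rowsw:
  assumes "\<And>i j. j \<noteq> sw i \<Longrightarrow> A i j = 0"
  shows "mmult A B i k = A i (sw i) * B (sw i) k"
  by (rule mmult_single_row) (use assms in auto)

lemma mmult_coldiag:
  assumes "\<And>j k. j \<noteq> k \<Longrightarrow> B j k = 0"
  shows "mmult A B i k = A i k * B k k"
  by (rule mmult_single_col) (use assms in auto)

lemma mmult_colsw:
  assumes "\<And>j k. j \<noteq> sw k \<Longrightarrow> B j k = 0"
  shows "mmult A B i k = A i (sw k) * B (sw k) k"
  by (rule mmult_single_col) (use assms in auto)

lemma ext_sum2:
  assumes "\<And>a b. f (Inl a) (Inl b) = g (Inl a) (Inl b)" "\<And>a b. f (Inl a) (Inr b) = g (Inl a) (Inr b)"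
    "\<And>a b. f (Inr a) (Inl b) = g (Inr a) (Inl b)" "\<And>a b. f (Inr a) (Inr b) = g (Inr a) (Inr b)"
  shows "f = g"
proof (intro ext)
  fix i k show "f i k = g i k" using assms by (cases i; cases k) auto
qed

lemma gamma_row: "j \<noteq> i \<Longrightarrow> gamma_op i j = 0"
  unfolding gamma_op_def by (cases i; cases j) (auto simp: id_mat_def zero_mat_def)

lemma F_row: "j \<noteq> sw i \<Longrightarrow> F_op i j = 0"
  unfolding F_op_def by (cases i; cases j) (auto simp: id_mat_def zero_mat_def)

lemma F_col: "j \<noteq> sw k \<Longrightarrow> F_op j k = 0"
  unfolding F_op_def by (cases k; cases j) (auto simp: id_mat_def zero_mat_def)

lemma absD_col: "j \<noteq> k \<Longrightarrow> absD_pow s j k = 0"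
  unfolding absD_pow_def N_pow_def by (cases k; cases j) (auto simp: zero_mat_def)

lemma gamma_mu: "mmult gamma_op (mu x) = blk (mu_plus x) zero_mat zero_mat (\<lambda>i k. - mu_minus x i k)"
  by (rule ext_sum2; subst mmult_rowdiag[OF gamma_row])
     (auto simp: gamma_op_def mu_def id_mat_def zero_mat_def)

lemma mult_absD:
  "mmult (blk P zero_mat zero_mat Q) (absD_pow s)
   = blk (\<lambda>i k. P i k * of_nat (k+1) powr (- 2 * s)) zero_mat zero_mat (\<lambda>i k. Q i k * of_nat (k+1) powr (- 2 * s))"
  by (rule ext_sum2; subst mmult_coldiag[OF absD_col])
     (auto simp: absD_pow_def N_pow_def zero_mat_def)

lemma F_sw1: "F_op i (sw i) = 1"
  by (cases i) (simp_all add: F_op_def id_mat_def)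

lemma F_sw2: "F_op (sw k) k = 1"
  by (cases k) (simp_all add: F_op_def id_mat_def)

lemma F_left: "mmult F_op M i k = M (sw i) k"
  by (subst mmult_rowsw[OF F_row]) (simp_all add: F_sw1)

lemma F_right: "mmult M F_op i k = M i (sw k)"
  by (subst mmult_colsw[OF F_col]) (simp_all add: F_sw2)

lemma comm_F_mu: "mcomm F_op (mu x) =
   blk zero_mat (\<lambda>i k. mu_minus x i k - mu_plus x i k) (\<lambda>i k. mu_plus x i k - mu_minus x i k) zero_mat"
  unfolding mcomm_def
  by (rule ext_sum2) (auto simp: F_left F_right mu_def zero_mat_def)

lemma gamma_F: "mmult gamma_op F_op = blk zero_mat id_mat (\<lambda>i k. - id_mat i k) zero_mat"
  by (rule ext_sum2; subst mmult_rowdiag[OF gamma_row])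
     (auto simp: gamma_op_def F_op_def id_mat_def zero_mat_def)

lemma gammaF_comm:
  "mmult (blk zero_mat id_mat (\<lambda>i k. - id_mat i k) zero_mat) (blk zero_mat (\<lambda>i k. - D i k) D zero_mat)
   = blk D zero_mat zero_mat D"
proof -
  have r: "j \<noteq> sw i \<Longrightarrow> blk zero_mat id_mat (\<lambda>i k. - id_mat i k) zero_mat i j = 0" for i j
    by (cases i; cases j) (auto simp: id_mat_def zero_mat_def)
  show ?thesis
    by (rule ext_sum2; subst mmult_rowsw[OF r]) (auto simp: id_mat_def zero_mat_def)
qed

lemma mtrace_blk:
  assumes "(\<lambda>i. P i i) summable_on UNIV" "(\<lambda>i. S i i) summable_on UNIV"
  shows "mtrace (blk P Q R S) = (\<Sum>\<^sub>\<infinity>i. P i i) + (\<Sum>\<^sub>\<infinity>i. S i i)"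
proof -
  define f where "f i = blk P Q R S i i" for i
  have u: "(UNIV :: (nat + nat) set) = range Inl \<union> range Inr"
    by (auto intro: sum.exhaust) (metis obj_sumE rangeI)
  have s1: "f summable_on range Inl"
    by (subst summable_on_reindex) (auto simp: o_def f_def assms)
  have s2: "f summable_on range Inr"
    by (subst summable_on_reindex) (auto simp: o_def f_def assms)
  have "mtrace (blk P Q R S) = infsum f (range Inl \<union> range Inr)"
    unfolding mtrace_def f_def u[symmetric] ..
  also have "\<dots> = infsum f (range Inl) + infsum f (range Inr)"
    by (rule infsum_Un_disjoint[OF s1 s2]) auto
  also have "\<dots> = (\<Sum>\<^sub>\<infinity>i. P i i) + (\<Sum>\<^sub>\<infinity>i. S i i)"
    by (simp add: infsum_reindex o_def f_def)
  finally show ?thesis .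
qed

lemma hs_blk:
  assumes "hilbert_schmidt P" "hilbert_schmidt Q" "hilbert_schmidt R" "hilbert_schmidt S"
  shows "hilbert_schmidt (blk P Q R S)"
proof -
  define f where "f = (\<lambda>(i, j). (cmod (blk P Q R S i j))\<^sup>2)"
  define m1 where "m1 = (\<lambda>(a::nat, b::nat). (Inl a :: nat + nat, Inl b :: nat + nat))"
  define m2 where "m2 = (\<lambda>(a::nat, b::nat). (Inl a :: nat + nat, Inr b :: nat + nat))"
  define m3 where "m3 = (\<lambda>(a::nat, b::nat). (Inr a :: nat + nat, Inl b :: nat + nat))"
  define m4 where "m4 = (\<lambda>(a::nat, b::nat). (Inr a :: nat + nat, Inr b :: nat + nat))"
  have u: "(UNIV :: ((nat + nat) \<times> (nat + nat)) set) = range m1 \<union> range m2 \<union> range m3 \<union> range m4"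
  proof (intro set_eqI iffI)
    fix z :: "(nat + nat) \<times> (nat + nat)"
    obtain i j where z: "z = (i, j)" by (cases z)
    show "z \<in> range m1 \<union> range m2 \<union> range m3 \<union> range m4"
      unfolding z m1_def m2_def m3_def m4_def
      by (cases i; cases j) (auto simp: image_iff)
  qed simp
  have "f summable_on range m1"
    by (subst summable_on_reindex) (use assms in \<open>auto simp: inj_on_def m1_def f_def o_def hilbert_schmidt_def case_prod_unfold\<close>)
  moreover have "f summable_on range m2"
    by (subst summable_on_reindex) (use assms in \<open>auto simp: inj_on_def m2_def f_def o_def hilbert_schmidt_def case_prod_unfold\<close>)
  moreover have "f summable_on range m3"
    by (subst summable_on_reindex) (use assms in \<open>auto simp: inj_on_def m3_def f_def o_def hilbert_schmidt_def case_prod_unfold\<close>)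
  moreover have "f summable_on range m4"
    by (subst summable_on_reindex) (use assms in \<open>auto simp: inj_on_def m4_def f_def o_def hilbert_schmidt_def case_prod_unfold\<close>)
  ultimately have "f summable_on UNIV" unfolding u by (intro summable_on_union)
  then show ?thesis unfolding hilbert_schmidt_def f_def .
qed

lemma hs_zero: "hilbert_schmidt zero_mat"
  by (simp add: hilbert_schmidt_def zero_mat_def case_prod_unfold)

lemma hs_diag:
  assumes "(\<lambda>i. (cmod (d i))^2) summable_on UNIV"
  shows "hilbert_schmidt (\<lambda>i j. if i = j then d i else 0)"
proof -
  define f where "f = (\<lambda>(i, j). (cmod ((\<lambda>i j. if i = j then d i else 0) i j))\<^sup>2)"
  have "f summable_on range (\<lambda>i. (i, i))"
    by (subst summable_on_reindex) (use assms in \<open>auto simp: inj_on_def f_def o_def\<close>)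
  then have "f summable_on UNIV"
    by (rule summable_on_cong_neutral[THEN iffD1, rotated -1]) (auto simp: f_def)
  then show ?thesis unfolding hilbert_schmidt_def f_def .
qed

lemma hs_uminus: "hilbert_schmidt A \<Longrightarrow> hilbert_schmidt (\<lambda>i j. - A i j)"
  by (simp add: hilbert_schmidt_def)

lemma prod_summable:
  fixes f g :: "nat \<Rightarrow> real"
  assumes "\<And>i. f i \<ge> 0" "\<And>k. g k \<ge> 0" "f summable_on UNIV" "g summable_on UNIV"
  shows "(\<lambda>(i, k). f i * g k) summable_on UNIV"
proof -
  have "(\<lambda>(i, k). f i * g k) summable_on Sigma UNIV (\<lambda>_. UNIV)"
  proof (rule summable_on_SigmaI[where g = "\<lambda>i. f i * (\<Sum>\<^sub>\<infinity>k. g k)"])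
    show "((\<lambda>k. case (i, k) of (i, k) \<Rightarrow> f i * g k) has_sum f i * (\<Sum>\<^sub>\<infinity>k. g k)) UNIV" for i
      using has_sum_cmult_right[OF has_sum_infsum[OF assms(4)], of "f i"] by simp
    show "(\<lambda>i. f i * (\<Sum>\<^sub>\<infinity>k. g k)) summable_on UNIV"
      by (rule summable_on_cmult_left[OF assms(3)])
  qed (use assms in auto)
  then show ?thesis by simp
qed

lemma hs_weighted:
  assumes "rapid_decay_mat D"
  shows "hilbert_schmidt (\<lambda>i k. of_nat (i+1) * D i k)"
proof -
  obtain C where C: "\<And>j k. (real (j + 1 + (k + 1))) ^ 3 * cmod (D j k) \<le> C"
    using assms unfolding rapid_decay_mat_def by blast
  define f where "f i = C^2 * (1 / (1 + real i)^2)" for i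
  define g where "g k = 1 / (1 + real k)^2" for k
  have fs: "f summable_on UNIV" unfolding f_def by (intro summable_on_cmult_right sum_inv_sq_nat)
  have gs: "g summable_on UNIV" unfolding g_def by (rule sum_inv_sq_nat)
  have ps: "(\<lambda>(i, k). f i * g k) summable_on UNIV"
    by (rule prod_summable[OF _ _ fs gs]) (auto simp: f_def g_def)
  have bnd: "(cmod (of_nat (i+1) * D i k))^2 \<le> f i * g k" for i k
  proof -
    define u where "u = 1 + real i"
    define v where "v = 1 + real k"
    define r where "r = real (i + 1 + (k + 1))"
    have u0: "u > 0" and v0: "v > 0" unfolding u_def v_def by auto
    have ur: "u \<le> r" and vr: "v \<le> r" unfolding u_def v_def r_def by auto
    have "u * u * v \<le> r * r * r"
      using ur vr u0 v0 by (intro mult_mono) auto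
    then have "cmod (D i k) * (u * u * v) \<le> cmod (D i k) * (r * r * r)"
      by (rule mult_left_mono) simp
    also have "\<dots> \<le> C" using C[of i k] unfolding r_def by (simp add: power3_eq_cube mult.commute)
    finally have "u * cmod (D i k) \<le> C / (u * v)" using u0 v0 by (simp add: field_simps)
    moreover have "cmod (of_nat (i+1) * D i k) = u * cmod (D i k)"
      unfolding u_def norm_mult norm_of_nat by simp
    ultimately have "cmod (of_nat (i+1) * D i k) \<le> C / (u * v)" by simp
    then have "(cmod (of_nat (i+1) * D i k))^2 \<le> (C / (u * v))^2"
      by (rule power_mono) simp
    also have "\<dots> = f i * g k" unfolding f_def g_def u_def v_def by (simp add: power2_eq_square)
    finally show ?thesis .
  qed
  show ?thesis unfolding hilbert_schmidt_def
  proof (rule summable_on_comparison_test[OF ps])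
    fix x :: "nat \<times> nat"
    obtain i k where x: "x = (i, k)" by (cases x)
    show "(case x of (i, k) \<Rightarrow> (cmod (of_nat (i+1) * D i k))\<^sup>2) \<le> (case x of (i, k) \<Rightarrow> f i * g k)"
      using bnd[of i k] unfolding x by simp
  qed auto
qed

lemma hs_col_weighted:
  assumes col: "\<And>k. (\<lambda>i. (cmod (M i k))^2) summable_on UNIV" "\<And>k. (\<Sum>\<^sub>\<infinity>i. (cmod (M i k))^2) \<le> K"
    and ws: "w summable_on UNIV" and w0: "\<And>k. w k \<ge> 0"
    and N: "\<And>k. (cmod (N k))^2 = w k"
  shows "hilbert_schmidt (\<lambda>i k. M i k * N k)"
proof -
  define f' where "f' = (\<lambda>(k, i). (cmod (M i k))^2 * w k)"
  have "f' summable_on Sigma UNIV (\<lambda>_. UNIV)"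
  proof (rule summable_on_SigmaI[where g = "\<lambda>k. (\<Sum>\<^sub>\<infinity>i. (cmod (M i k))^2) * w k"])
    show "((\<lambda>i. f' (k, i)) has_sum (\<Sum>\<^sub>\<infinity>i. (cmod (M i k))^2) * w k) UNIV" for k
      using has_sum_cmult_left[OF has_sum_infsum[OF col(1)[of k]], of "w k"] by (simp add: f'_def)
    have "(\<lambda>k. K * w k) summable_on UNIV" by (rule summable_on_cmult_right[OF ws])
    then show "(\<lambda>k. (\<Sum>\<^sub>\<infinity>i. (cmod (M i k))^2) * w k) summable_on UNIV"
    proof (rule summable_on_comparison_test)
      fix k
      show "(\<Sum>\<^sub>\<infinity>i. (cmod (M i k))^2) * w k \<le> K * w k"
        by (rule mult_right_mono[OF col(2) w0])
      show "0 \<le> (\<Sum>\<^sub>\<infinity>i. (cmod (M i k))^2) * w k"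
        by (intro mult_nonneg_nonneg infsum_nonneg w0) simp
    qed
  qed (auto simp: f'_def w0)
  then have "f' summable_on UNIV \<times> UNIV" by simp
  then have "(\<lambda>(x, y). f' (y, x)) summable_on UNIV \<times> UNIV" by (subst (asm) summable_on_swap)
  then show ?thesis unfolding hilbert_schmidt_def f'_def
    by (simp add: norm_mult power_mult_distrib N)
qed

lemma norm_Npow: "cmod (of_nat (k+1) powr (s::complex)) = real (k+1) powr Re s"
proof -
  have "cmod ((of_nat (k+1) :: complex) powr s) = Re (of_nat (k+1)) powr Re s"
    by (rule norm_powr_real_powr) auto
  then show ?thesis by simp
qed

lemma Npow_sq_summable:
  assumes "Re s > 1/2"
  shows "(\<lambda>k. (cmod (of_nat (k+1) powr (- s)))^2) summable_on UNIV"
proof -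
  have eq: "(cmod (of_nat (k+1) powr (- s)))^2 = real (Suc k) powr (- 2 * Re s)" for k
  proof -
    have "(cmod (of_nat (k+1) powr (- s)))^2 = (real (k+1) powr (- Re s)) * (real (k+1) powr (- Re s))"
      unfolding norm_Npow power2_eq_square by simp
    also have "\<dots> = real (k+1) powr (- Re s + - Re s)" by (rule powr_add[symmetric])
    finally show ?thesis by simp
  qed
  have "summable (\<lambda>n. real n powr (- 2 * Re s))" using assms by (subst summable_real_powr_iff) simp
  then have "summable (\<lambda>n. real (Suc n) powr (- 2 * Re s))" by (subst summable_Suc_iff)
  then show ?thesis unfolding eq by (intro summable_nonneg_imp_summable_on) auto
qed

lemma Npow_half: "(of_nat (k+1) powr (- s) :: complex) * of_nat (k+1) powr (- s) = of_nat (k+1) powr (- 2 * s)"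
  by (simp add: powr_add[symmetric])

lemma term_bound:
  fixes d :: "nat \<Rightarrow> complex"
  assumes C: "\<And>n. real (n+1) ^ (R+2) * cmod (d n) \<le> C"
    and y: "- 2 * Re y \<le> real R"
  shows "cmod (d n * of_nat (n+1) powr (- 2 * y)) \<le> C / (1 + real n)^2"
proof -
  have pos: "real (n+1) > 0" by simp
  have "cmod (d n * of_nat (n+1) powr (- 2 * y)) = cmod (d n) * real (n+1) powr (- 2 * Re y)"
    unfolding norm_mult norm_Npow by simp
  also have "\<dots> \<le> cmod (d n) * real (n+1) powr (real R)"
    by (intro mult_left_mono powr_mono y) auto
  also have "\<dots> = cmod (d n) * real (n+1) ^ R" using pos by (simp add: powr_realpow)
  also have "\<dots> \<le> C / real (n+1)^2"
  proof -
    have eq: "cmod (d n) * real (n+1) ^ R * real (n+1)^2 = real (n+1) ^ (R+2) * cmod (d n)"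
      by (simp only: power_add mult_ac)
    then have "cmod (d n) * real (n+1) ^ R * real (n+1)^2 \<le> C" using C[of n] by linarith
    then show ?thesis using pos by (simp add: pos_le_divide_eq)
  qed
  finally show ?thesis by simp
qed

lemma dirichlet_entire:
  fixes d :: "nat \<Rightarrow> complex"
  assumes rd: "\<And>p. \<exists>C. \<forall>n. real (n+1) ^ p * cmod (d n) \<le> C"
  shows "(\<lambda>s. \<Sum>n. d n * of_nat (n+1) powr (- 2 * s)) holomorphic_on UNIV"
    and "summable (\<lambda>n. cmod (d n * of_nat (n+1) powr (- 2 * s)))"
proof -
  have sumb: "summable (\<lambda>n. cmod (d n * of_nat (n+1) powr (- 2 * y)))"
    if "- 2 * Re y \<le> real R" for y R
  proof -
    obtain C where C: "\<And>n. real (n+1) ^ (R+2) * cmod (d n) \<le> C" using rd by blast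
    have "summable (\<lambda>n. C * (1 / (1 + real n)^2))"
      by (intro summable_mult sum_inv_sq_nat')
    then show ?thesis
      by (rule summable_comparison_test'[where N = 0]) (use term_bound[OF C that] in auto)
  qed
  show "summable (\<lambda>n. cmod (d n * of_nat (n+1) powr (- 2 * s)))"
  proof -
    obtain R :: nat where "real R \<ge> - 2 * Re s" using real_arch_simple by blast
    then show ?thesis by (intro sumb) auto
  qed
  define f where "f n z = d n * of_nat (n+1) powr (- 2 * z)" for n z
  define f' where "f' n z = d n * (Ln (of_nat (n+1)) * of_nat (n+1) powr (- 2 * z) * (- 2))" for n z
  have der: "(f n has_field_derivative f' n z) (at z)" for n z
  proof -
    have w0: "(of_nat (n+1) :: complex) \<noteq> 0" by (metis of_nat_eq_0_iff add_eq_0_iff_both_eq_0 one_neq_zero)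
    have "((\<lambda>z. of_nat (n+1) powr z) has_field_derivative Ln (of_nat (n+1)) * of_nat (n+1) powr (- 2 * z)) (at (- 2 * z))"
      by (rule has_field_derivative_powr_right[OF w0])
    moreover have "((\<lambda>z. - 2 * z) has_field_derivative (- 2)) (at z)"
      by (auto intro!: derivative_eq_intros)
    ultimately have "((\<lambda>z. of_nat (n+1) powr (- 2 * z)) has_field_derivative
        Ln (of_nat (n+1)) * of_nat (n+1) powr (- 2 * z) * (- 2)) (at z)"
      by (rule DERIV_chain2)
    then show ?thesis unfolding f_def f'_def by (rule DERIV_cmult)
  qed
  have "\<exists>g g'. \<forall>x \<in> UNIV. ((\<lambda>n. f n x) sums g x) \<and> ((\<lambda>n. f' n x) sums g' x) \<and> (g has_field_derivative g' x) (at x)"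
  proof (rule series_and_derivative_comparison_complex[OF open_UNIV])
    show "\<And>n x. x \<in> UNIV \<Longrightarrow> (f n has_field_derivative f' n x) (at x)" using der by blast
    fix x :: complex
    obtain R :: nat where R: "real R \<ge> 2 * \<bar>Re x\<bar> + 2" using real_arch_simple by blast
    obtain C where C: "\<And>n. real (n+1) ^ (R+2) * cmod (d n) \<le> C" using rd by blast
    have C0: "C \<ge> 0" using C[of 0] by (smt (verit) norm_ge_zero zero_le_power of_nat_0_le_iff mult_nonneg_nonneg)
    show "\<exists>d h. 0 < d \<and> summable h \<and> range h \<subseteq> \<real>\<^sub>\<ge>\<^sub>0 \<and>
            (\<forall>\<^sub>F n in sequentially. \<forall>y\<in>ball x d \<inter> UNIV. cmod (f n y) \<le> cmod (h n))"
    proof (intro exI[of _ 1] exI[of _ "\<lambda>n. complex_of_real (C * (1 / (1 + real n)^2))"] conjI)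
      show "summable (\<lambda>n. complex_of_real (C * (1 / (1 + real n)^2)))"
        by (simp only: summable_complex_of_real) (intro summable_mult sum_inv_sq_nat')
      show "range (\<lambda>n. complex_of_real (C * (1 / (1 + real n)^2))) \<subseteq> \<real>\<^sub>\<ge>\<^sub>0"
        using C0 by auto
      show "\<forall>\<^sub>F n in sequentially. \<forall>y\<in>ball x 1 \<inter> UNIV. cmod (f n y) \<le> cmod (complex_of_real (C * (1 / (1 + real n)^2)))"
      proof (intro always_eventually allI ballI)
        fix n y assume "y \<in> ball x 1 \<inter> UNIV"
        then have "cmod (x - y) < 1" by (simp add: dist_norm)
        then have "\<bar>Re x - Re y\<bar> < 1" using abs_Re_le_cmod[of "x - y"] by simp
        then have "- 2 * Re y \<le> real R" using R by linarith
        then have 1: "cmod (f n y) \<le> C / (1 + real n)^2" unfolding f_def by (rule term_bound[OF C])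
        have 2: "cmod (complex_of_real (C * (1 / (1 + real n)^2))) = C / (1 + real n)^2"
          by (simp only: norm_of_real) (use C0 in simp)
        show "cmod (f n y) \<le> cmod (complex_of_real (C * (1 / (1 + real n)^2)))"
          using 1 2 by linarith
      qed
    qed simp
  qed
  then obtain g g' where gg: "\<And>x. ((\<lambda>n. f n x) sums g x)" "\<And>x. (g has_field_derivative g' x) (at x)"
    by blast
  have "g = (\<lambda>s. \<Sum>n. d n * of_nat (n+1) powr (- 2 * s))"
    using gg(1) unfolding f_def by (auto simp: sums_iff)
  then show "(\<lambda>s. \<Sum>n. d n * of_nat (n+1) powr (- 2 * s)) holomorphic_on UNIV"
    using gg(2) unfolding holomorphic_on_def field_differentiable_def by auto
qed

lemma infsum_eq_suminf:
  fixes f :: "nat \<Rightarrow> complex"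
  assumes "summable (\<lambda>n. norm (f n))"
  shows "(\<Sum>\<^sub>\<infinity>n. f n) = (\<Sum>n. f n)"
  by (rule infsumI[OF norm_summable_imp_has_sum[OF assms summable_sums[OF summable_norm_cancel[OF assms]]]])

lemma one_plus_of_nat_nz [simp]: "(1 + (of_nat n :: complex)) \<noteq> 0"
  by (metis of_nat_Suc of_nat_eq_0_iff nat.distinct(1))

theorem mainTheorem6:
  fixes q :: real and x :: "mat \<times> mat"
  assumes "0 < q" and "q < 1" and "x \<in> C_inf_S2q"
  shows "rapid_decay_mat (\<lambda>i k. mu_plus x i k - mu_minus x i k)
    \<and> trace_class (mcomm F_op (mu x))
    \<and> (\<forall>s. Re s > 1/2 \<longrightarrow> trace_class (mmult (mmult gamma_op (mu x)) (absD_pow s)))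
    \<and> (\<exists>g. g holomorphic_on UNIV
         \<and> (\<forall>s. Re s > 1/2 \<longrightarrow> g s = psi x s)
         \<and> residue (\<lambda>s. g s / s) 0 = g 0
         \<and> g 0 = 1/2 * mtrace (mmult (mmult gamma_op F_op) (mcomm F_op (mu x)))
         \<and> g 0 = mtrace (\<lambda>i k. mu_plus x i k - mu_minus x i k))"
proof -
  obtain a gp gm where a: "rapid_decay_seq a" and gp: "rapid_decay_mat gp" and gm: "rapid_decay_mat gm"
    and xp: "\<And>i k. mu_plus x i k = a (int i - int k) + gp i k"
    and xm: "\<And>i k. mu_minus x i k = a (int i - int k) + gm i k"
    using C_inf_decomp[OF assms(3)] by blast
  define D where "D = (\<lambda>i k. mu_plus x i k - mu_minus x i k)"
  have D_eq: "D = (\<lambda>i k. gp i k - gm i k)" unfolding D_def xp xm by simp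
  have rdD: "rapid_decay_mat D" unfolding D_eq by (rule rapid_decay_mat_diff[OF gp gm])
  have comm: "mcomm F_op (mu x) = blk zero_mat (\<lambda>i k. - D i k) D zero_mat"
    unfolding comm_F_mu D_def by simp

  have tc1: "trace_class (mcomm F_op (mu x))"
  proof -
    define Wd :: mat where "Wd = (\<lambda>i j. if i = j then 1 / of_nat (i+1) else 0)"
    define W where "W = blk Wd zero_mat zero_mat Wd"
    define B where "B = blk zero_mat (\<lambda>i k. - (of_nat (i+1) * D i k)) (\<lambda>i k. of_nat (i+1) * D i k) zero_mat"
    have nz: "(1 + (of_nat n :: complex)) \<noteq> 0" for n
      by (metis of_nat_Suc of_nat_eq_0_iff nat.distinct(1))
    have Wrow: "j \<noteq> i \<Longrightarrow> W i j = 0" for i j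
      unfolding W_def Wd_def by (cases i; cases j) (auto simp: zero_mat_def)
    have e1: "mmult W B = blk zero_mat (\<lambda>i k. - D i k) D zero_mat"
      by (rule ext_sum2; subst mmult_rowdiag[OF Wrow])
         (auto simp: W_def B_def Wd_def zero_mat_def field_simps nz)
    have h1: "hilbert_schmidt W"
    proof -
      have "hilbert_schmidt Wd" unfolding Wd_def
        by (rule hs_diag) (unfold norm_divide norm_one norm_of_nat, use sum_inv_sq_nat in \<open>simp add: power_divide\<close>)
      then show ?thesis unfolding W_def by (intro hs_blk hs_zero)
    qed
    have h2: "hilbert_schmidt B"
      unfolding B_def by (intro hs_blk hs_zero hs_uminus hs_weighted rdD)
    show ?thesis unfolding trace_class_def comm
      by (rule exI[of _ W], rule exI[of _ B]) (use e1 h1 h2 in simp)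
  qed

  define Np where "Np s k = (of_nat (k+1) :: complex) powr (- 2 * s)" for s k
  have gmD: "mmult (mmult gamma_op (mu x)) (absD_pow s)
      = blk (\<lambda>i k. mu_plus x i k * Np s k) zero_mat zero_mat (\<lambda>i k. - mu_minus x i k * Np s k)" for s
    unfolding gamma_mu mult_absD Np_def by simp

  have tc2: "trace_class (mmult (mmult gamma_op (mu x)) (absD_pow s))" if s: "Re s > 1/2" for s
  proof -
    define Nh where "Nh k = (of_nat (k+1) :: complex) powr (- s)" for k
    define Nd :: mat where "Nd = (\<lambda>j k. if j = k then Nh j else 0)"
    define A where "A = blk (\<lambda>i k. mu_plus x i k * Nh k) zero_mat zero_mat (\<lambda>i k. - mu_minus x i k * Nh k)"
    define B where "B = blk Nd zero_mat zero_mat Nd"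
    have Bcol: "j \<noteq> k \<Longrightarrow> B j k = 0" for j k
      unfolding B_def Nd_def by (cases j; cases k) (auto simp: zero_mat_def)
    have NN: "Nh k * Nh k = Np s k" for k unfolding Nh_def Np_def by (rule Npow_half)
    have e1: "mmult A B = blk (\<lambda>i k. mu_plus x i k * Np s k) zero_mat zero_mat (\<lambda>i k. - mu_minus x i k * Np s k)"
      by (rule ext_sum2; subst mmult_coldiag[OF Bcol])
         (auto simp: A_def B_def Nd_def zero_mat_def NN[symmetric] mult.assoc)
    have hB: "hilbert_schmidt B"
    proof -
      have "hilbert_schmidt Nd" unfolding Nd_def Nh_def
        by (rule hs_diag) (rule Npow_sq_summable[OF s])
      then show ?thesis unfolding B_def by (intro hs_blk hs_zero)
    qed
    have hA: "hilbert_schmidt A"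
    proof -
      have ws: "(\<lambda>k. (cmod (Nh k))^2) summable_on UNIV" unfolding Nh_def by (rule Npow_sq_summable[OF s])
      obtain Kp where Kp: "\<And>k. (\<lambda>i. (cmod (mu_plus x i k))^2) summable_on UNIV"
          "\<And>k. (\<Sum>\<^sub>\<infinity>i. (cmod (mu_plus x i k))^2) \<le> Kp"
        using col_bound[OF a gp xp] by blast
      obtain Km where Km: "\<And>k. (\<lambda>i. (cmod (mu_minus x i k))^2) summable_on UNIV"
          "\<And>k. (\<Sum>\<^sub>\<infinity>i. (cmod (mu_minus x i k))^2) \<le> Km"
        using col_bound[OF a gm xm] by blast
      have h1: "hilbert_schmidt (\<lambda>i k. mu_plus x i k * Nh k)"
        by (rule hs_col_weighted[OF Kp ws]) auto
      have h2: "hilbert_schmidt (\<lambda>i k. - mu_minus x i k * Nh k)"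
        by (rule hs_col_weighted[where K = Km, OF _ _ ws]) (use Km in auto)
      show ?thesis unfolding A_def by (intro hs_blk hs_zero h1 h2)
    qed
    show ?thesis unfolding trace_class_def gmD
      by (rule exI[of _ A], rule exI[of _ B]) (use e1 hA hB in simp)
  qed

  have rdd: "\<exists>C. \<forall>n. real (n+1) ^ p * cmod (D n n) \<le> C" for p
  proof -
    obtain C where C: "\<And>j k. (real (j + 1 + (k + 1))) ^ p * cmod (D j k) \<le> C"
      using rdD unfolding rapid_decay_mat_def by blast
    have "real (n+1) ^ p * cmod (D n n) \<le> C" for n
    proof -
      have "real (n+1) ^ p * cmod (D n n) \<le> (real (n + 1 + (n + 1))) ^ p * cmod (D n n)"
        by (intro mult_right_mono power_mono) auto
      then show ?thesis using C[of n n] by linarith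
    qed
    then show ?thesis by blast
  qed
  define G where "G s = (\<Sum>n. D n n * Np s n)" for s
  have holo: "G holomorphic_on UNIV"
    using dirichlet_entire(1)[OF rdd] unfolding G_def Np_def .
  have Gsum: "summable (\<lambda>n. cmod (D n n * Np s n))" for s
    using dirichlet_entire(2)[OF rdd] unfolding Np_def .
  have G0: "G 0 = (\<Sum>n. D n n)" unfolding G_def Np_def by simp
  have Dsum: "summable (\<lambda>n. cmod (D n n))" using Gsum[of 0] unfolding Np_def by simp
  have trD: "mtrace D = G 0"
    unfolding mtrace_def G0 by (rule infsum_eq_suminf[OF Dsum])
  have Dsumon: "(\<lambda>n. D n n) summable_on UNIV"
    by (rule norm_summable_imp_summable_on[OF Dsum])

  have psiG: "G s = psi x s" if s: "Re s > 1/2" for s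
  proof -
    obtain Cp where Cp: "\<And>j k. cmod (gp j k) \<le> Cp / (real (j + k + 2))^0" using rdm_bound[OF gp] by blast
    obtain Cm where Cm: "\<And>j k. cmod (gm j k) \<le> Cm / (real (j + k + 2))^0" using rdm_bound[OF gm] by blast
    define w where "w n = real (Suc n) powr (- 2 * Re s)" for n
    have "summable (\<lambda>n. real n powr (- 2 * Re s))" using s by (subst summable_real_powr_iff) simp
    then have "summable w" unfolding w_def by (subst summable_Suc_iff)
    then have ws: "w summable_on UNIV" by (rule summable_nonneg_imp_summable_on) (simp add: w_def)
    have nNp: "cmod (Np s n) = w n" for n unfolding Np_def w_def norm_Npow by simp
    have P: "(\<lambda>i. mu_plus x i i * Np s i) summable_on UNIV"
    proof (rule abs_summable_summable, rule summable_on_comparison_test)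
      show "(\<lambda>n. (cmod (a 0) + Cp) * w n) summable_on UNIV" by (rule summable_on_cmult_right[OF ws])
      fix n
      have "cmod (mu_plus x n n) \<le> cmod (a 0) + Cp" unfolding xp using Cp[of n n]
        by (simp add: norm_triangle_le)
      then show "norm (mu_plus x n n * Np s n) \<le> (cmod (a 0) + Cp) * w n"
        unfolding norm_mult nNp by (rule mult_right_mono) (simp add: w_def)
    qed auto
    have Q: "(\<lambda>i. - mu_minus x i i * Np s i) summable_on UNIV"
    proof (rule abs_summable_summable, rule summable_on_comparison_test)
      show "(\<lambda>n. (cmod (a 0) + Cm) * w n) summable_on UNIV" by (rule summable_on_cmult_right[OF ws])
      fix n
      have "cmod (mu_minus x n n) \<le> cmod (a 0) + Cm" unfolding xm using Cm[of n n]
        by (simp add: norm_triangle_le)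
      then show "norm (- mu_minus x n n * Np s n) \<le> (cmod (a 0) + Cm) * w n"
        unfolding norm_mult norm_minus_cancel nNp by (rule mult_right_mono) (simp add: w_def)
    qed auto
    have "psi x s = (\<Sum>\<^sub>\<infinity>i. mu_plus x i i * Np s i) + (\<Sum>\<^sub>\<infinity>i. - mu_minus x i i * Np s i)"
      unfolding psi_def gmD by (rule mtrace_blk[where P = "\<lambda>i k. mu_plus x i k * Np s k" and S = "\<lambda>i k. - mu_minus x i k * Np s k", OF P Q])
    also have "\<dots> = (\<Sum>\<^sub>\<infinity>i. mu_plus x i i * Np s i + - mu_minus x i i * Np s i)"
      by (rule infsum_add[OF P Q, symmetric])
    also have "\<dots> = (\<Sum>\<^sub>\<infinity>i. D i i * Np s i)"
      unfolding D_def by (simp add: algebra_simps)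
    also have "\<dots> = G s" unfolding G_def by (rule infsum_eq_suminf[OF Gsum])
    finally show ?thesis by simp
  qed

  have res: "residue (\<lambda>s. G s / s) 0 = G 0"
    using residue_simple[OF open_UNIV UNIV_I[of 0] holo] by simp

  have ch: "G 0 = 1/2 * mtrace (mmult (mmult gamma_op F_op) (mcomm F_op (mu x)))"
  proof -
    have "mmult (mmult gamma_op F_op) (mcomm F_op (mu x)) = blk D zero_mat zero_mat D"
      unfolding gamma_F comm by (rule gammaF_comm)
    then have "mtrace (mmult (mmult gamma_op F_op) (mcomm F_op (mu x))) = mtrace (blk D zero_mat zero_mat D)"
      by simp
    also have "\<dots> = (\<Sum>\<^sub>\<infinity>i. D i i) + (\<Sum>\<^sub>\<infinity>i. D i i)"
      by (rule mtrace_blk[where P = D and S = D, OF Dsumon Dsumon])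
    also have "\<dots> = mtrace D + mtrace D" by (simp add: mtrace_def)
    finally have "mtrace (mmult (mmult gamma_op F_op) (mcomm F_op (mu x))) = mtrace D + mtrace D" .
    then show ?thesis using trD by simp
  qed

  show ?thesis
  proof (intro conjI allI impI exI[of _ G])
    show "rapid_decay_mat (\<lambda>i k. mu_plus x i k - mu_minus x i k)" using rdD unfolding D_def .
    show "trace_class (mcomm F_op (mu x))" by (rule tc1)
    show "trace_class (mmult (mmult gamma_op (mu x)) (absD_pow s))" if "1/2 < Re s" for s
      using tc2 that by blast
    show "G holomorphic_on UNIV" by (rule holo)
    show "G s = psi x s" if "1/2 < Re s" for s using psiG that by blast
    show "residue (\<lambda>s. G s / s) 0 = G 0" by (rule res)
    show "G 0 = 1/2 * mtrace (mmult (mmult gamma_op F_op) (mcomm F_op (mu x)))" by (rule ch)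
    show "G 0 = mtrace (\<lambda>i k. mu_plus x i k - mu_minus x i k)" using trD unfolding D_def by simp
  qed
qed

end
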